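(* Let $(E,\langle\cdot,\cdot\rangle,\rho,\circ)$ be a pre-Courant algebroid over $M$. Define $[\![e_1,e_2]\!]=\frac12(e_1\circ e_2-e_2\circ e_1)$ and $\mathcal J(e_1,e_2,e_3)=[\![e_1,[\![e_2,e_3]\!]]\!]+[\![e_2,[\![e_3,e_1]\!]]\!]+[\![e_3,[\![e_1,e_2]\!]]\!]$. On the complex $V_1=\Gamma(\operatorname{Ker}(\rho))\xrightarrow{i}V_0=\Gamma(E)$ ($i$ the inclusion) define $l_2(e_1,e_2)=[\![e_1,e_2]\!]$ for $e_1,e_2\in\Gamma(E)$, $l_2(e,\kappa)=[\![e,\kappa]\!]=-l_2(\kappa,e)$ for $e\in\Gamma(E)$, $\kappa\in\Gamma(\operatorname{Ker}\rho)$, and $l_3(e_1,e_2,e_3)=\mathcal J(e_1,e_2,e_3)$. Then $(V_1\xrightarrow{i}V_0,l_2,l_3)$ is a Lie 2-algebra.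
   Context: A Courant vector bundle over a smooth manifold $M$ is a vector bundle $E\to M$ with a fibrewise nondegenerate symmetric bilinear form $\langle\cdot,\cdot\rangle$ and a bundle map $\rho:E\to TM$ such that $\rho\circ\rho^*=0$, where $\rho^*:T^*M\to E^*\cong E$ is the dual of $\rho$ followed by the identification $E^*\cong E$ via $\langle\cdot,\cdot\rangle$. A pre-Courant algebroid structure on it is an $\mathbb R$-bilinear operation $\circ$ on $\Gamma(E)$ such that for all $e_1,e_2,e_3\in\Gamma(E)$: (i) $\rho(e_1\circ e_2)=[\rho(e_1),\rho(e_2)]$; (ii) $\langle e_1\circ e_1,e_2\rangle=\frac12\rho(e_2)\langle e_1,e_1\rangle$; (iii) $\rho(e_1)\langle e_2,e_3\rangle=\langle e_1\circ e_2,e_3\rangle+\langle e_2,e_1\circ e_3\rangle$. A Leibniz 2-algebra $(V_1\xrightarrow{d}V_0,l_2,l_3)$ consists of a complex of vector spaces, bilinear $l_2:V_i\times V_j\to V_{i+j}$ ($i+j\le1$) and trilinear $l_3:V_0^{3}\to V_1$ such that for all $w,x,y,z\in V_0$, $m,n\in V_1$: $d\,l_2(x,m)=l_2(x,dm)$; $d\,l_2(m,x)=l_2(dm,x)$; $l_2(dm,n)=l_2(m,dn)$; $d\,l_3(x,y,z)=l_2(x,l_2(y,z))-l_2(l_2(x,y),z)-l_2(y,l_2(x,z))$; $l_3(x,y,dm)=l_2(x,l_2(y,m))-l_2(l_2(x,y),m)-l_2(y,l_2(x,m))$; $l_3(x,dm,y)=l_2(x,l_2(m,y))-l_2(l_2(x,m),y)-l_2(m,l_2(x,y))$;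 $l_3(dm,x,y)=l_2(m,l_2(x,y))-l_2(l_2(m,x),y)-l_2(x,l_2(m,y))$; and $l_2(w,l_3(x,y,z))-l_2(x,l_3(w,y,z))+l_2(y,l_3(w,x,z))+l_2(l_3(w,x,y),z)-l_3(l_2(w,x),y,z)-l_3(x,l_2(w,y),z)-l_3(x,y,l_2(w,z))+l_3(w,l_2(x,y),z)+l_3(w,y,l_2(x,z))-l_3(w,x,l_2(y,z))=0$. A Lie 2-algebra is a Leibniz 2-algebra in which $l_2$ is skew-symmetric ($l_2(x,y)=-l_2(y,x)$, $l_2(x,m)=-l_2(m,x)$) and $l_3$ is totally skew-symmetric. *)

theory Defs
  imports Main "HOL.Real_Vector_Spaces"
begin

text \<open>
  'f plays the role of the commutative real algebra C^infinity(M);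
  'e plays the role of the C^infinity(M)-module Gamma(E) of sections;
  vector fields are the (real-linear) derivations of 'f, with the commutator
  as Lie bracket; smult is the module action of functions on sections.
\<close>

definition derivation :: "('f::{real_algebra_1,comm_ring_1} \<Rightarrow> 'f) \<Rightarrow> bool" where
  "derivation X \<longleftrightarrow> linear X \<and> (\<forall>f g. X (f * g) = f * X g + X f * g)"

definition vf_bracket :: "('f::ring \<Rightarrow> 'f) \<Rightarrow> ('f \<Rightarrow> 'f) \<Rightarrow> ('f \<Rightarrow> 'f)" where
  "vf_bracket X Y = (\<lambda>g. X (Y g) - Y (X g))"

definition one_form :: "(('f::{real_algebra_1,comm_ring_1} \<Rightarrow> 'f) \<Rightarrow> 'f) \<Rightarrow> bool" where
  "one_form \<xi> \<longleftrightarrow>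
     (\<forall>X Y. derivation X \<longrightarrow> derivation Y \<longrightarrow> \<xi> (\<lambda>g. X g + Y g) = \<xi> X + \<xi> Y) \<and>
     (\<forall>f X. derivation X \<longrightarrow> \<xi> (\<lambda>g. f * X g) = f * \<xi> X)"

definition fun_module :: "('f::{real_algebra_1,comm_ring_1} \<Rightarrow> 'e::real_vector \<Rightarrow> 'e) \<Rightarrow> bool" where
  "fun_module smult \<longleftrightarrow>
     (\<forall>f e1 e2. smult f (e1 + e2) = smult f e1 + smult f e2) \<and>
     (\<forall>f g e. smult (f + g) e = smult f e + smult g e) \<and>
     (\<forall>f g e. smult (f * g) e = smult f (smult g e)) \<and>
     (\<forall>e. smult 1 e = e) \<and>
     (\<forall>r e. scaleR r e = smult (of_real r) e)"

definition fun_linear_functional ::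
    "('f::{real_algebra_1,comm_ring_1} \<Rightarrow> 'e::real_vector \<Rightarrow> 'e) \<Rightarrow> ('e \<Rightarrow> 'f) \<Rightarrow> bool" where
  "fun_linear_functional smult \<phi> \<longleftrightarrow>
     (\<forall>e1 e2. \<phi> (e1 + e2) = \<phi> e1 + \<phi> e2) \<and> (\<forall>f e. \<phi> (smult f e) = f * \<phi> e)"

text \<open>Courant vector bundle: fibrewise nondegenerate symmetric pairing and anchor rho
  with rho o rho^* = 0.  Fibrewise nondegeneracy is expressed (Serre--Swan) by the
  pairing inducing a bijection between sections and C^infinity(M)-linear functionals.
  rho o rho^* = 0 says: whenever e = rho^*(xi), i.e. pair e e' = xi (rho e') for all e',
  then rho e = 0.\<close>
definition courant_vector_bundle ::
    "('f::{real_algebra_1,comm_ring_1} \<Rightarrow> 'e::real_vector \<Rightarrow> 'e) \<Rightarrow> ('e \<Rightarrow> 'e \<Rightarrow> 'f)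
     \<Rightarrow> ('e \<Rightarrow> 'f \<Rightarrow> 'f) \<Rightarrow> bool" where
  "courant_vector_bundle smult pair rho \<longleftrightarrow>
     fun_module smult \<and>
     (\<forall>e1 e2. pair e1 e2 = pair e2 e1) \<and>
     (\<forall>e2. fun_linear_functional smult (\<lambda>e1. pair e1 e2)) \<and>
     (\<forall>\<phi>. fun_linear_functional smult \<phi> \<longrightarrow> (\<exists>!e. pair e = \<phi>)) \<and>
     (\<forall>e. derivation (rho e)) \<and>
     (\<forall>e1 e2. rho (e1 + e2) = (\<lambda>g. rho e1 g + rho e2 g)) \<and>
     (\<forall>f e. rho (smult f e) = (\<lambda>g. f * rho e g)) \<and>
     (\<forall>\<xi>. one_form \<xi> \<longrightarrow>
        (\<forall>e. (\<forall>e'. pair e e' = \<xi> (rho e')) \<longrightarrow> rho e = (\<lambda>_. 0)))"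

definition real_bilinear :: "('a::real_vector \<Rightarrow> 'b::real_vector \<Rightarrow> 'c::real_vector) \<Rightarrow> bool" where
  "real_bilinear b \<longleftrightarrow> (\<forall>x. linear (b x)) \<and> (\<forall>y. linear (\<lambda>x. b x y))"

definition pre_courant_algebroid ::
    "('f::{real_algebra_1,comm_ring_1} \<Rightarrow> 'e::real_vector \<Rightarrow> 'e) \<Rightarrow> ('e \<Rightarrow> 'e \<Rightarrow> 'f)
     \<Rightarrow> ('e \<Rightarrow> 'f \<Rightarrow> 'f) \<Rightarrow> ('e \<Rightarrow> 'e \<Rightarrow> 'e) \<Rightarrow> bool" where
  "pre_courant_algebroid smult pair rho circ \<longleftrightarrow>
     courant_vector_bundle smult pair rho \<and>
     real_bilinear circ \<and>
     (\<forall>e1 e2. rho (circ e1 e2) = vf_bracket (rho e1) (rho e2)) \<and>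
     (\<forall>e1 e2. pair (circ e1 e1) e2 = scaleR (1/2) (rho e2 (pair e1 e1))) \<and>
     (\<forall>e1 e2 e3. rho e1 (pair e2 e3) = pair (circ e1 e2) e3 + pair e2 (circ e1 e3))"

definition skew_bracket :: "('e::real_vector \<Rightarrow> 'e \<Rightarrow> 'e) \<Rightarrow> 'e \<Rightarrow> 'e \<Rightarrow> 'e" where
  "skew_bracket circ e1 e2 = scaleR (1/2) (circ e1 e2 - circ e2 e1)"

definition jacobiator :: "('e::real_vector \<Rightarrow> 'e \<Rightarrow> 'e) \<Rightarrow> 'e \<Rightarrow> 'e \<Rightarrow> 'e \<Rightarrow> 'e" where
  "jacobiator circ e1 e2 e3 =
     skew_bracket circ e1 (skew_bracket circ e2 e3) +
     skew_bracket circ e2 (skew_bracket circ e3 e1) +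
     skew_bracket circ e3 (skew_bracket circ e1 e2)"

text \<open>A 2-term complex V1 --d--> V0 of real vector spaces (given as subspaces of
  ambient real vector spaces).  l2 is given by its three components
  l00 : V0 x V0 -> V0, l01 : V0 x V1 -> V1, l10 : V1 x V0 -> V1;
  l3 : V0^3 -> V1.\<close>

definition linear_on :: "'a::real_vector set \<Rightarrow> ('a \<Rightarrow> 'b::real_vector) \<Rightarrow> bool" where
  "linear_on A g \<longleftrightarrow> (\<forall>x\<in>A. \<forall>y\<in>A. g (x + y) = g x + g y) \<and> (\<forall>r. \<forall>x\<in>A. g (scaleR r x) = scaleR r (g x))"

definition leibniz_2_algebra ::
    "'a::real_vector set \<Rightarrow> 'b::real_vector set \<Rightarrow> ('a \<Rightarrow> 'b)
     \<Rightarrow> ('b \<Rightarrow> 'b \<Rightarrow> 'b) \<Rightarrow> ('b \<Rightarrow> 'a \<Rightarrow> 'a) \<Rightarrow> ('a \<Rightarrow> 'b \<Rightarrow> 'a)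
     \<Rightarrow> ('b \<Rightarrow> 'b \<Rightarrow> 'b \<Rightarrow> 'a) \<Rightarrow> bool" where
  "leibniz_2_algebra V1 V0 d l00 l01 l10 l3 \<longleftrightarrow>
     subspace V1 \<and> subspace V0 \<and>
     d ` V1 \<subseteq> V0 \<and> linear_on V1 d \<and>
     (\<forall>x\<in>V0. \<forall>y\<in>V0. l00 x y \<in> V0) \<and>
     (\<forall>x\<in>V0. \<forall>m\<in>V1. l01 x m \<in> V1) \<and>
     (\<forall>m\<in>V1. \<forall>x\<in>V0. l10 m x \<in> V1) \<and>
     (\<forall>x\<in>V0. \<forall>y\<in>V0. \<forall>z\<in>V0. l3 x y z \<in> V1) \<and>
     (\<forall>x\<in>V0. linear_on V0 (l00 x)) \<and> (\<forall>y\<in>V0. linear_on V0 (\<lambda>x. l00 x y)) \<and>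
     (\<forall>x\<in>V0. linear_on V1 (l01 x)) \<and> (\<forall>m\<in>V1. linear_on V0 (\<lambda>x. l01 x m)) \<and>
     (\<forall>m\<in>V1. linear_on V0 (l10 m)) \<and> (\<forall>x\<in>V0. linear_on V1 (\<lambda>m. l10 m x)) \<and>
     (\<forall>x\<in>V0. \<forall>y\<in>V0. linear_on V0 (l3 x y)) \<and>
     (\<forall>x\<in>V0. \<forall>z\<in>V0. linear_on V0 (\<lambda>y. l3 x y z)) \<and>
     (\<forall>y\<in>V0. \<forall>z\<in>V0. linear_on V0 (\<lambda>x. l3 x y z)) \<and>
     (\<forall>x\<in>V0. \<forall>m\<in>V1. d (l01 x m) = l00 x (d m)) \<and>
     (\<forall>x\<in>V0. \<forall>m\<in>V1. d (l10 m x) = l00 (d m) x) \<and>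
     (\<forall>m\<in>V1. \<forall>n\<in>V1. l01 (d m) n = l10 m (d n)) \<and>
     (\<forall>x\<in>V0. \<forall>y\<in>V0. \<forall>z\<in>V0.
        d (l3 x y z) = l00 x (l00 y z) - l00 (l00 x y) z - l00 y (l00 x z)) \<and>
     (\<forall>x\<in>V0. \<forall>y\<in>V0. \<forall>m\<in>V1.
        l3 x y (d m) = l01 x (l01 y m) - l01 (l00 x y) m - l01 y (l01 x m)) \<and>
     (\<forall>x\<in>V0. \<forall>y\<in>V0. \<forall>m\<in>V1.
        l3 x (d m) y = l01 x (l10 m y) - l10 (l01 x m) y - l10 m (l00 x y)) \<and>
     (\<forall>x\<in>V0. \<forall>y\<in>V0. \<forall>m\<in>V1.
        l3 (d m) x y = l10 m (l00 x y) - l10 (l10 m x) y - l01 x (l10 m y)) \<and>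
     (\<forall>w\<in>V0. \<forall>x\<in>V0. \<forall>y\<in>V0. \<forall>z\<in>V0.
        l01 w (l3 x y z) - l01 x (l3 w y z) + l01 y (l3 w x z) + l10 (l3 w x y) z
        - l3 (l00 w x) y z - l3 x (l00 w y) z - l3 x y (l00 w z)
        + l3 w (l00 x y) z + l3 w y (l00 x z) - l3 w x (l00 y z) = 0)"

definition lie_2_algebra ::
    "'a::real_vector set \<Rightarrow> 'b::real_vector set \<Rightarrow> ('a \<Rightarrow> 'b)
     \<Rightarrow> ('b \<Rightarrow> 'b \<Rightarrow> 'b) \<Rightarrow> ('b \<Rightarrow> 'a \<Rightarrow> 'a) \<Rightarrow> ('a \<Rightarrow> 'b \<Rightarrow> 'a)
     \<Rightarrow> ('b \<Rightarrow> 'b \<Rightarrow> 'b \<Rightarrow> 'a) \<Rightarrow> bool" where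
  "lie_2_algebra V1 V0 d l00 l01 l10 l3 \<longleftrightarrow>
     leibniz_2_algebra V1 V0 d l00 l01 l10 l3 \<and>
     (\<forall>x\<in>V0. \<forall>y\<in>V0. l00 x y = - l00 y x) \<and>
     (\<forall>x\<in>V0. \<forall>m\<in>V1. l01 x m = - l10 m x) \<and>
     (\<forall>x\<in>V0. \<forall>y\<in>V0. \<forall>z\<in>V0. l3 x y z = - l3 y x z) \<and>
     (\<forall>x\<in>V0. \<forall>y\<in>V0. \<forall>z\<in>V0. l3 x y z = - l3 x z y)"

end

theory Submission
  imports Defs
begin

lemma skew_algebra:
  fixes b :: "'a::ab_group_add \<Rightarrow> 'a \<Rightarrow> 'a"
  assumes add1: "\<And>u v s. b (u + v) s = b u s + b v s"
      and add2: "\<And>u v s. b s (u + v) = b s u + b s v"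
      and skew: "\<And>u v. b u v = - b v u"
      and J_def: "J = (\<lambda>x y z. b x (b y z) + b y (b z x) + b z (b x y))"
  shows "J x y z = b x (b y z) - b (b x y) z - b y (b x z)"
    and "J x y z = - J y x z" and "J x y z = - J x z y"
    and "J x z y = b x (- b y z) - (- b y (b x z)) - (- b (b x y) z)"
    and "J z x y = - b (b x y) z - (- b y (b z x)) - b x (- b y z)"
    and "b w (J x y z) - b x (J w y z) + b y (J w x z) + (- b z (J w x y))
        - J (b w x) y z - J x (b w y) z - J x y (b w z)
        + J w (b x y) z + J w y (b x z) - J w x (b y z) = 0"
proof -
  have n1: "b (- u) v = - b u v" for u v
    using add1[of u "-u" v] add1[of 0 0 v] by (simp add: add_eq_0_iff)
  have n2: "b v (- u) = - b v u" for u v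
    using add2[of v u "-u"] add2[of v 0 0] by (simp add: add_eq_0_iff)
  have d1: "b (u - v) s = b u s - b v s" for u v s
    using add1[of u "-v" s] n1[of v s] by simp
  have d2: "b s (u - v) = b s u - b s v" for u v s
    using add2[of s u "-v"] n2[where u=v and v=s] by simp
  note S = skew[of "x" "w"] skew[of "y" "w"] skew[of "y" "x"] skew[of "z" "w"] skew[of "z" "x"] skew[of "z" "y"] skew[of "(b w x)" "y"] skew[of "(b w x)" "z"] skew[of "(b w y)" "x"] skew[of "(b w y)" "z"] skew[of "(b w z)" "x"] skew[of "(b w z)" "y"] skew[of "(b x y)" "w"] skew[of "(b x y)" "z"] skew[of "(b x y)" "(b w z)"] skew[of "(b x z)" "w"] skew[of "(b x z)" "y"] skew[of "(b x z)" "(b w y)"] skew[of "(b y z)" "w"] skew[of "(b y z)" "x"] skew[of "(b y z)" "(b w x)"] skew[of "(b w (b x y))" "z"] skew[of "(b x (b w y))" "z"] skew[of "(b y (b w x))" "z"] skew[of "(b w (b x z))" "y"] skew[of "(b x (b w z))" "y"] skew[of "(b z (b w x))" "y"] skew[of "(b w (b y z))" "x"] skew[of "(b y (b w z))" "x"] skew[of "(b z (b w y))" "x"] skew[of "(b x (b y z))" "w"] skew[of "(b y (b x z))" "w"] skew[of "(b z (b x y))" "w"]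
  show "J x y z = b x (b y z) - b (b x y) z - b y (b x z)"
    "J x y z = - J y x z" "J x y z = - J x z y"
    "J x z y = b x (- b y z) - (- b y (b x z)) - (- b (b x y) z)"
    "J z x y = - b (b x y) z - (- b y (b z x)) - b x (- b y z)"
    "b w (J x y z) - b x (J w y z) + b y (J w x z) + (- b z (J w x y))
        - J (b w x) y z - J x (b w y) z - J x y (b w z)
        + J w (b x y) z + J w y (b x z) - J w x (b y z) = 0"
    by (simp_all add: J_def add1 add2 n1 n2 d1 d2 S algebra_simps)
qed

lemma main_facts:
  fixes smult :: "'f::{real_algebra_1,comm_ring_1} \<Rightarrow> 'e::real_vector \<Rightarrow> 'e"
    and pair :: "'e \<Rightarrow> 'e \<Rightarrow> 'f"
    and rho :: "'e \<Rightarrow> 'f \<Rightarrow> 'f"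
    and circ :: "'e \<Rightarrow> 'e \<Rightarrow> 'e"
  assumes A: "pre_courant_algebroid smult pair rho circ"
  shows "lie_2_algebra {\<kappa>. rho \<kappa> = (\<lambda>_. 0)} UNIV (\<lambda>\<kappa>. \<kappa>)
           (skew_bracket circ)
           (\<lambda>e \<kappa>. skew_bracket circ e \<kappa>)
           (\<lambda>\<kappa> e. - skew_bracket circ e \<kappa>)
           (jacobiator circ)"
proof -
  have FM: "fun_module smult" and radd: "\<And>e1 e2. rho (e1 + e2) = (\<lambda>g. rho e1 g + rho e2 g)"
    and rsm: "\<And>f e. rho (smult f e) = (\<lambda>g. f * rho e g)"
    and der: "\<And>e. derivation (rho e)"
    and bil: "real_bilinear circ"
    and rc: "\<And>e1 e2. rho (circ e1 e2) = vf_bracket (rho e1) (rho e2)"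
    using A unfolding pre_courant_algebroid_def courant_vector_bundle_def by auto
  have sc: "\<And>r e. scaleR r e = smult (of_real r) e" using FM unfolding fun_module_def by auto
  have lr: "linear (rho e)" for e using der[of e] unfolding derivation_def by auto
  have l1: "linear (circ x)" for x using bil unfolding real_bilinear_def by auto
  have l2: "linear (\<lambda>x. circ x y)" for y using bil unfolding real_bilinear_def by auto
  have c_add1: "circ (u + v) s = circ u s + circ v s" for u v s
    using real_vector.linear_add[OF l2[of s]] by simp
  have c_add2: "circ s (u + v) = circ s u + circ s v" for u v s
    using real_vector.linear_add[OF l1[of s]] by simp
  have c_sc1: "circ (r *\<^sub>R u) s = r *\<^sub>R circ u s" for r u s
    using real_vector.linear_scale[OF l2[of s]] by simp
  have c_sc2: "circ s (r *\<^sub>R u) = r *\<^sub>R circ s u" for r u s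
    using real_vector.linear_scale[OF l1[of s]] by simp
  define b where "b = skew_bracket circ"
  have b_add1: "b (u + v) s = b u s + b v s" for u v s
    unfolding b_def skew_bracket_def by (simp add: c_add1 c_add2 algebra_simps)
  have b_add2: "b s (u + v) = b s u + b s v" for u v s
    unfolding b_def skew_bracket_def by (simp add: c_add1 c_add2 algebra_simps)
  have b_sc1: "b (r *\<^sub>R u) s = r *\<^sub>R b u s" for r u s
    unfolding b_def skew_bracket_def by (simp add: c_sc1 c_sc2 algebra_simps)
  have b_sc2: "b s (r *\<^sub>R u) = r *\<^sub>R b s u" for r u s
    unfolding b_def skew_bracket_def by (simp add: c_sc1 c_sc2 algebra_simps)
  have b_skew: "b u v = - b v u" for u v
    unfolding b_def skew_bracket_def by (simp add: algebra_simps)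
  have Jdef: "jacobiator circ = (\<lambda>x y z. b x (b y z) + b y (b z x) + b z (b x y))"
    unfolding b_def jacobiator_def by auto
  note SA = skew_algebra[of b, OF b_add1 b_add2 b_skew Jdef]
  have r0: "rho 0 = (\<lambda>_. 0)"
  proof
    fix g have "rho 0 g = rho 0 g + rho 0 g" using fun_cong[OF radd[of 0 0], of g] by simp
    then show "rho 0 g = 0" by simp
  qed
  have rsc: "rho (r *\<^sub>R e) = (\<lambda>g. of_real r * rho e g)" for r e
    using rsm sc by simp
  have rneg: "rho (- e) = (\<lambda>g. - rho e g)" for e
    using rsc[of "-1" e] by simp
  have rdiff: "rho (u - v) = (\<lambda>g. rho u g - rho v g)" for u v
    using radd[of u "-v"] rneg[of v] by simp
  have h: "of_real (1/2) * (of_real 2 :: 'f) = 1"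
    by (metis of_real_1 of_real_mult field_sum_of_halves mult_2_right)
  have rb: "rho (b u v) = vf_bracket (rho u) (rho v)" for u v
  proof
    fix g
    have "rho (b u v) g = of_real (1/2) * (rho u (rho v g) - rho v (rho u g) - (rho v (rho u g) - rho u (rho v g)))"
      unfolding b_def skew_bracket_def by (simp add: rsc rdiff rc vf_bracket_def)
    also have "\<dots> = (of_real (1/2) * of_real 2) * (rho u (rho v g) - rho v (rho u g))"
      by (simp add: algebra_simps)
    also have "\<dots> = rho u (rho v g) - rho v (rho u g)"
      using h by (metis mult_1_left)
    finally show "rho (b u v) g = vf_bracket (rho u) (rho v) g" by (simp add: vf_bracket_def)
  qed
  have rJ: "rho (jacobiator circ x y z) = (\<lambda>_. 0)" for x y z
    by (rule ext) (simp add: Jdef radd rb vf_bracket_def real_vector.linear_diff[OF lr])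
  have rbk: "rho (b x m) = (\<lambda>_. 0)" if "rho m = (\<lambda>_. 0)" for x m
    using that by (simp add: rb vf_bracket_def real_vector.linear_0[OF lr])
  have sub: "subspace {\<kappa>. rho \<kappa> = (\<lambda>_. 0)}"
    unfolding subspace_def by (simp add: r0 radd rsc)
  have Jl: "jacobiator circ (x + x') y z = jacobiator circ x y z + jacobiator circ x' y z"
    "jacobiator circ y (x + x') z = jacobiator circ y x z + jacobiator circ y x' z"
    "jacobiator circ y z (x + x') = jacobiator circ y z x + jacobiator circ y z x'"
    "jacobiator circ (r *\<^sub>R x) y z = r *\<^sub>R jacobiator circ x y z"
    "jacobiator circ y (r *\<^sub>R x) z = r *\<^sub>R jacobiator circ y x z"
    "jacobiator circ y z (r *\<^sub>R x) = r *\<^sub>R jacobiator circ y z x" for x x' y z r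
    by (simp_all add: Jdef b_add1 b_add2 b_sc1 b_sc2 algebra_simps)
  show ?thesis
    unfolding lie_2_algebra_def leibniz_2_algebra_def linear_on_def b_def[symmetric]
    apply (intro conjI)
    using sub apply (simp_all add: rbk rneg rJ b_add1 b_add2 b_sc1 b_sc2 Jl)
    apply (metis b_skew)
    apply (metis b_skew)
    apply (simp add: SA(1))
    apply (simp add: SA(1))
    apply (simp add: SA(4))
    apply (simp add: SA(5))
    apply (metis b_skew)
    apply (intro allI)
    apply (rule iffD2[OF eq_iff_diff_eq_0])
    using SA(6) apply (simp only: diff_conv_add_uminus)
    apply (metis b_skew)
    using SA(2) apply blast
    using SA(3) apply blast
    done
qed

theorem theorem4p8:
  fixes smult :: "'f::{real_algebra_1,comm_ring_1} \<Rightarrow> 'e::real_vector \<Rightarrow> 'e"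
    and pair :: "'e \<Rightarrow> 'e \<Rightarrow> 'f"
    and rho :: "'e \<Rightarrow> 'f \<Rightarrow> 'f"
    and circ :: "'e \<Rightarrow> 'e \<Rightarrow> 'e"
  assumes "pre_courant_algebroid smult pair rho circ"
  shows "lie_2_algebra {\<kappa>. rho \<kappa> = (\<lambda>_. 0)} UNIV (\<lambda>\<kappa>. \<kappa>)
           (skew_bracket circ)
           (\<lambda>e \<kappa>. skew_bracket circ e \<kappa>)
           (\<lambda>\<kappa> e. - skew_bracket circ e \<kappa>)
           (jacobiator circ)"
  using main_facts[OF assms] .

end
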